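(* Let $X$ be a BN with full support on the DAG $\mathcal G$ with states $\mathcal A$, $f:\mathcal A\to\mathcal B$ a surjection and $U_v=f(X_v)$. Suppose that for all $v\in V_p$, all $w,\tilde w\in\mathcal A^{pa(v)}$ with $f(w)=f(\tilde w)$ and all $b\in\mathcal B$, $$\mathbb P(U_v=b\mid X_{pa(v)}=w)=\mathbb P(U_v=b\mid X_{pa(v)}=\tilde w).$$ Then (D3) holds, and for every $v$ with $depth(v)\ge1$, every $w\in\mathcal A^{pa(v)}$, every $b\in\mathcal B$ and every initial distribution $\alpha$ with $\mathbb P_\alpha(U_{pa(v)}=f(w))>0$, $$\mathbb P_\alpha(U_v=b\mid U_{pa(v)}=f(w))=\mathbb P(U_v=b\mid X_{pa(v)}=w).$$
   Context: $\mathcal G=(V,E)$ is a finite DAG; $pa(v)$ parents; $V_s$ parentless vertices, $V_p=V\setminus V_s$; $depth(v)$ maximal number of edges of a directed path from a vertex of $V_s$ to $v$. A BN on $\mathcal G$ with states $\mathcal A$ (finite) is specified by distributions $\alpha_v$ on $\mathcal A$ for $v\in V_s$ and CPDs $P_v(\cdot\mid a_{pa(v)})$ for $v\in V_p$; law $\prod_{v\in V_s}\alpha_v(x_v)\prod_{v\in V_p}P_v(x_v\mid x_{pa(v)})$; full support: all $x\in\mathcal A^V$ have positive probability (so $\mathbb P(X_v=c\mid X_{pa(v)}=w)=P_v(c\mid w)$, and $\mathbb P(U_v=b\mid X_{pa(v)}=w)=\sum_{c\in f^{-1}(b)}P_v(c\mid w)$). $\mathbb P_\alpha$ is the law with the same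 CPDs and initial distribution $\alpha$. $f$ applied coordinatewise. (D3): for every initial distribution $\tilde\alpha$, $(U_v)$ under $\mathbb P_{\tilde\alpha}$ factorises over $\mathcal G$ (law of form $\prod_vq_v(u_v\mid u_{pa(v)})$), and for every $v\in V_p$, $b_v$, $b_{pa(v)}$ the value $\mathbb P_{\tilde\alpha}(U_v=b_v\mid U_{pa(v)}=b_{pa(v)})$ is the same for all $\tilde\alpha$ with $\mathbb P_{\tilde\alpha}(U_{pa(v)}=b_{pa(v)})>0$. *)

theory Defs
  imports Complex_Main "HOL-Library.FuncSet"
begin

definition is_dag :: "'v set \<Rightarrow> ('v \<times> 'v) set \<Rightarrow> bool" where
  "is_dag V E \<longleftrightarrow> finite V \<and> E \<subseteq> V \<times> V \<and> acyclic E"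

definition pa :: "('v \<times> 'v) set \<Rightarrow> 'v \<Rightarrow> 'v set" where
  "pa E v = {u. (u, v) \<in> E}"

definition sources :: "'v set \<Rightarrow> ('v \<times> 'v) set \<Rightarrow> 'v set" where
  "sources V E = {v \<in> V. pa E v = {}}"

definition nonsources :: "'v set \<Rightarrow> ('v \<times> 'v) set \<Rightarrow> 'v set" where
  "nonsources V E = V - sources V E"

definition dpath :: "('v \<times> 'v) set \<Rightarrow> 'v list \<Rightarrow> bool" where
  "dpath E xs \<longleftrightarrow> (\<forall>i. Suc i < length xs \<longrightarrow> (xs ! i, xs ! Suc i) \<in> E)"

definition depth :: "'v set \<Rightarrow> ('v \<times> 'v) set \<Rightarrow> 'v \<Rightarrow> nat" where
  "depth V E v = Max {length xs - 1 | xs. xs \<noteq> [] \<and> hd xs \<in> sources V E \<and> last xs = v \<and> dpath E xs}"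

definition configs :: "'v set \<Rightarrow> ('v \<Rightarrow> 'a) set" where
  "configs S = PiE S (\<lambda>_. UNIV)"

definition is_init :: "'v set \<Rightarrow> ('v \<times> 'v) set \<Rightarrow> ('v \<Rightarrow> 'a::finite \<Rightarrow> real) \<Rightarrow> bool" where
  "is_init V E \<alpha> \<longleftrightarrow> (\<forall>v \<in> sources V E. (\<forall>a. \<alpha> v a \<ge> 0) \<and> sum (\<alpha> v) UNIV = 1)"

text \<open>CPDs: P v w c = P_v(c | w) for v non-source and w a configuration of pa(v).\<close>
definition is_cpds :: "'v set \<Rightarrow> ('v \<times> 'v) set \<Rightarrow> ('v \<Rightarrow> ('v \<Rightarrow> 'a) \<Rightarrow> 'a::finite \<Rightarrow> real) \<Rightarrow> bool" where
  "is_cpds V E P \<longleftrightarrow> (\<forall>v \<in> nonsources V E. \<forall>w \<in> configs (pa E v).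
      (\<forall>c. P v w c \<ge> 0) \<and> sum (P v w) UNIV = 1)"

definition joint :: "'v set \<Rightarrow> ('v \<times> 'v) set \<Rightarrow> ('v \<Rightarrow> 'a \<Rightarrow> real)
    \<Rightarrow> ('v \<Rightarrow> ('v \<Rightarrow> 'a) \<Rightarrow> 'a \<Rightarrow> real) \<Rightarrow> ('v \<Rightarrow> 'a) \<Rightarrow> real" where
  "joint V E \<alpha> P x = (\<Prod>v \<in> sources V E. \<alpha> v (x v)) *
                      (\<Prod>v \<in> nonsources V E. P v (restrict x (pa E v)) (x v))"

definition prb :: "'v set \<Rightarrow> ('v \<times> 'v) set \<Rightarrow> ('v \<Rightarrow> 'a \<Rightarrow> real)
    \<Rightarrow> ('v \<Rightarrow> ('v \<Rightarrow> 'a) \<Rightarrow> 'a \<Rightarrow> real) \<Rightarrow> (('v \<Rightarrow> 'a) \<Rightarrow> bool) \<Rightarrow> real" where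
  "prb V E \<alpha> P S = (\<Sum>x \<in> {x \<in> configs V. S x}. joint V E \<alpha> P x)"

definition cprb :: "'v set \<Rightarrow> ('v \<times> 'v) set \<Rightarrow> ('v \<Rightarrow> 'a \<Rightarrow> real)
    \<Rightarrow> ('v \<Rightarrow> ('v \<Rightarrow> 'a) \<Rightarrow> 'a \<Rightarrow> real) \<Rightarrow> (('v \<Rightarrow> 'a) \<Rightarrow> bool) \<Rightarrow> (('v \<Rightarrow> 'a) \<Rightarrow> bool) \<Rightarrow> real" where
  "cprb V E \<alpha> P S T = prb V E \<alpha> P (\<lambda>x. S x \<and> T x) / prb V E \<alpha> P T"

definition full_support :: "'v set \<Rightarrow> ('v \<times> 'v) set \<Rightarrow> ('v \<Rightarrow> 'a \<Rightarrow> real)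
    \<Rightarrow> ('v \<Rightarrow> ('v \<Rightarrow> 'a) \<Rightarrow> 'a \<Rightarrow> real) \<Rightarrow> bool" where
  "full_support V E \<alpha> P \<longleftrightarrow> (\<forall>x \<in> configs V. joint V E \<alpha> P x > 0)"

definition factorises :: "'v set \<Rightarrow> ('v \<times> 'v) set \<Rightarrow> (('v \<Rightarrow> 'b::finite) \<Rightarrow> real) \<Rightarrow> bool" where
  "factorises V E law \<longleftrightarrow> (\<exists>q :: 'v \<Rightarrow> ('v \<Rightarrow> 'b) \<Rightarrow> 'b \<Rightarrow> real.
      (\<forall>v \<in> V. \<forall>w \<in> configs (pa E v). (\<forall>b. q v w b \<ge> 0) \<and> sum (q v w) UNIV = 1) \<and>
      (\<forall>u \<in> configs V. law u = (\<Prod>v \<in> V. q v (restrict u (pa E v)) (u v))))"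

definition D3 :: "'v set \<Rightarrow> ('v \<times> 'v) set \<Rightarrow> ('v \<Rightarrow> ('v \<Rightarrow> 'a::finite) \<Rightarrow> 'a \<Rightarrow> real)
    \<Rightarrow> ('a \<Rightarrow> 'b::finite) \<Rightarrow> bool" where
  "D3 V E P f \<longleftrightarrow>
    (\<forall>\<alpha>'. is_init V E \<alpha>' \<longrightarrow>
        factorises V E (\<lambda>u. prb V E \<alpha>' P (\<lambda>x. \<forall>v \<in> V. f (x v) = u v))) \<and>
    (\<forall>v \<in> nonsources V E. \<forall>bv. \<forall>bpa \<in> configs (pa E v). \<forall>\<alpha>1 \<alpha>2.
        is_init V E \<alpha>1 \<and> is_init V E \<alpha>2 \<and>
        prb V E \<alpha>1 P (\<lambda>x. \<forall>u \<in> pa E v. f (x u) = bpa u) > 0 \<and>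
        prb V E \<alpha>2 P (\<lambda>x. \<forall>u \<in> pa E v. f (x u) = bpa u) > 0 \<longrightarrow>
        cprb V E \<alpha>1 P (\<lambda>x. f (x v) = bv) (\<lambda>x. \<forall>u \<in> pa E v. f (x u) = bpa u) =
        cprb V E \<alpha>2 P (\<lambda>x. f (x v) = bv) (\<lambda>x. \<forall>u \<in> pa E v. f (x u) = bpa u))"

end

theory Submission
  imports Defs
begin

lemma sum_configs_split:
  fixes F :: "('v \<Rightarrow> 'a::finite) \<Rightarrow> real"
  assumes "m \<in> W"
  shows "(\<Sum>x\<in>configs W. F x) = (\<Sum>x'\<in>configs (W-{m}). \<Sum>c\<in>UNIV. F (x'(m:=c)))"
proof -
  define h :: "'a \<times> ('v \<Rightarrow> 'a) \<Rightarrow> ('v \<Rightarrow> 'a)" where "h = (\<lambda>(y, g). g(m := y))"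
  have W: "W = insert m (W-{m})" using assms by blast
  have 1: "configs W = h ` (UNIV \<times> configs (W-{m}))"
    unfolding configs_def h_def by (subst W, subst PiE_insert_eq) simp
  have 2: "inj_on h (UNIV \<times> configs (W-{m}))"
    unfolding configs_def h_def using inj_combinator[of m "W-{m}" "\<lambda>_. UNIV"] by simp
  have "(\<Sum>x\<in>configs W. F x) = sum (F \<circ> h) (UNIV \<times> configs (W-{m}))"
    unfolding 1 by (rule sum.reindex[OF 2])
  also have "\<dots> = (\<Sum>c\<in>UNIV. \<Sum>x'\<in>configs (W-{m}). F (x'(m:=c)))"
    unfolding sum.cartesian_product by (simp add: h_def case_prod_beta)
  also have "\<dots> = (\<Sum>x'\<in>configs (W-{m}). \<Sum>c\<in>UNIV. F (x'(m:=c)))"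
    by (rule sum.swap)
  finally show ?thesis .
qed

definition K :: "('v \<times> 'v) set \<Rightarrow> ('v \<Rightarrow> 'a \<Rightarrow> real) \<Rightarrow> ('v \<Rightarrow> ('v \<Rightarrow> 'a) \<Rightarrow> 'a \<Rightarrow> real) \<Rightarrow> 'v \<Rightarrow> ('v \<Rightarrow> 'a) \<Rightarrow> real" where
  "K E \<alpha> P u x = (if pa E u = {} then \<alpha> u (x u) else P u (restrict x (pa E u)) (x u))"

lemma joint_K:
  assumes "finite V"
  shows "joint V E \<alpha> P x = (\<Prod>u\<in>V. K E \<alpha> P u x)"
proof -
  have V: "V = sources V E \<union> nonsources V E" and D: "sources V E \<inter> nonsources V E = {}"
    unfolding sources_def nonsources_def by auto
  have fs: "finite (sources V E)" "finite (nonsources V E)"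
    using assms unfolding sources_def nonsources_def by auto
  have "(\<Prod>u\<in>V. K E \<alpha> P u x) = (\<Prod>u\<in>sources V E \<union> nonsources V E. K E \<alpha> P u x)"
    using V by simp
  also have "\<dots> = (\<Prod>u\<in>sources V E. K E \<alpha> P u x) * (\<Prod>u\<in>nonsources V E. K E \<alpha> P u x)"
    by (rule prod.union_disjoint[OF fs D])
  also have "\<dots> = joint V E \<alpha> P x"
    unfolding joint_def
    by (intro arg_cong2[where f="(*)"] prod.cong) (auto simp: K_def sources_def nonsources_def)
  finally show ?thesis by simp
qed

lemma prb_K:
  fixes \<alpha> :: "'v \<Rightarrow> 'a::finite \<Rightarrow> real"
  assumes "finite V"
  shows "prb V E \<alpha> P S = (\<Sum>x\<in>configs V. (\<Prod>u\<in>V. K E \<alpha> P u x) * (if S x then 1 else 0))"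
proof -
  have fin: "finite (configs V :: ('v \<Rightarrow> 'a) set)"
    unfolding configs_def using assms by (simp add: finite_PiE)
  show ?thesis unfolding prb_def
    unfolding sum.inter_filter[OF fin] joint_K[OF assms] by (rule sum.cong) simp_all
qed

lemma restrict_upd_notin: "m \<notin> S \<Longrightarrow> restrict (x(m:=c)) S = restrict x S"
  by (auto simp: restrict_def fun_eq_iff)

lemma K_upd_other: "u \<noteq> m \<Longrightarrow> m \<notin> pa E u \<Longrightarrow> K E \<alpha> P u (x(m:=c)) = K E \<alpha> P u x"
  by (simp add: K_def restrict_upd_notin)

lemma K_upd_self: "m \<notin> pa E m \<Longrightarrow>
   K E \<alpha> P m (x(m:=c)) = (if pa E m = {} then \<alpha> m c else P m (restrict x (pa E m)) c)"
  by (simp add: K_def restrict_upd_notin)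

lemma step_lemma:
  fixes h :: "('v \<Rightarrow> 'a::finite) \<Rightarrow> real"
  assumes fin: "finite W" and m: "m \<in> W" and sink: "\<forall>u\<in>W. (m,u) \<notin> E"
  shows "(\<Sum>x\<in>configs W. (\<Prod>u\<in>W. K E \<alpha> P u x) * h x) =
    (\<Sum>x'\<in>configs (W-{m}). (\<Prod>u\<in>W-{m}. K E \<alpha> P u x') * (\<Sum>c\<in>UNIV. K E \<alpha> P m (x'(m:=c)) * h (x'(m:=c))))"
proof -
  have "(\<Sum>x\<in>configs W. (\<Prod>u\<in>W. K E \<alpha> P u x) * h x) =
     (\<Sum>x'\<in>configs (W-{m}). \<Sum>c\<in>UNIV. (\<Prod>u\<in>W. K E \<alpha> P u (x'(m:=c))) * h (x'(m:=c)))"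
    by (rule sum_configs_split[OF m])
  also have "\<dots> = (\<Sum>x'\<in>configs (W-{m}). \<Sum>c\<in>UNIV. (\<Prod>u\<in>W-{m}. K E \<alpha> P u x') * (K E \<alpha> P m (x'(m:=c)) * h (x'(m:=c))))"
  proof (intro sum.cong refl)
    fix x' c
    have "(\<Prod>u\<in>W. K E \<alpha> P u (x'(m:=c))) = K E \<alpha> P m (x'(m:=c)) * (\<Prod>u\<in>W-{m}. K E \<alpha> P u (x'(m:=c)))"
      using prod.remove[OF fin m] by blast
    also have "(\<Prod>u\<in>W-{m}. K E \<alpha> P u (x'(m:=c))) = (\<Prod>u\<in>W-{m}. K E \<alpha> P u x')"
      by (rule prod.cong) (use sink in \<open>auto simp: K_upd_other pa_def\<close>)
    finally have eq: "(\<Prod>u\<in>W. K E \<alpha> P u (x'(m:=c))) = K E \<alpha> P m (x'(m:=c)) * (\<Prod>u\<in>W-{m}. K E \<alpha> P u x')" .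
    show "(\<Prod>u\<in>W. K E \<alpha> P u (x'(m:=c))) * h (x'(m:=c)) = (\<Prod>u\<in>W-{m}. K E \<alpha> P u x') * (K E \<alpha> P m (x'(m:=c)) * h (x'(m:=c)))"
      by (simp only: eq mult_ac)
  qed
  also have "\<dots> = (\<Sum>x'\<in>configs (W-{m}). (\<Prod>u\<in>W-{m}. K E \<alpha> P u x') * (\<Sum>c\<in>UNIV. K E \<alpha> P m (x'(m:=c)) * h (x'(m:=c))))"
    by (simp add: sum_distrib_left)
  finally show ?thesis .
qed

lemma exists_sink:
  assumes "finite E" "acyclic E" "S \<noteq> {}"
  shows "\<exists>m\<in>S. \<forall>u\<in>S. (m,u) \<notin> E"
proof -
  have "wf (E\<inverse>)" by (rule finite_acyclic_wf_converse[OF assms(1,2)])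
  from assms(3) obtain x where "x \<in> S" by blast
  then obtain z where z: "z \<in> S" "\<And>y. (y, z) \<in> E\<inverse> \<Longrightarrow> y \<notin> S"
    using wfE_min[OF \<open>wf (E\<inverse>)\<close>] by metis
  show ?thesis
  proof (intro bexI[OF _ z(1)] ballI)
    fix u assume "u \<in> S" then show "(z, u) \<notin> E" using z(2)[of u] by auto
  qed
qed

lemma K_norm:
  assumes init: "is_init V E \<alpha>" and cpds: "is_cpds V E P" and mV: "m \<in> V" and mm: "(m,m) \<notin> E"
  shows "(\<Sum>c\<in>UNIV. K E \<alpha> P m (x(m:=c))) = 1"
proof -
  have mpa: "m \<notin> pa E m" using mm by (simp add: pa_def)
  show ?thesis
  proof (cases "pa E m = {}")
    case True
    then have "m \<in> sources V E" using mV by (simp add: sources_def)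
    then show ?thesis using init True by (simp add: K_upd_self[OF mpa] is_init_def)
  next
    case False
    then have "m \<in> nonsources V E" using mV by (simp add: sources_def nonsources_def)
    moreover have "restrict x (pa E m) \<in> configs (pa E m)" by (simp add: configs_def)
    ultimately show ?thesis using cpds False by (simp add: K_upd_self[OF mpa] is_cpds_def)
  qed
qed

lemma marg_aux:
  fixes \<alpha> :: "'v \<Rightarrow> 'a::finite \<Rightarrow> real" and g :: "('v \<Rightarrow> 'a) \<Rightarrow> real"
  assumes finE: "finite E" and acyc: "acyclic E" and init: "is_init V E \<alpha>" and cpds: "is_cpds V E P"
    and finV: "finite V" and anc: "\<forall>u\<in>A. pa E u \<subseteq> A"
  shows "card (W - A) = n \<Longrightarrow> W \<subseteq> V \<Longrightarrow> A \<subseteq> W \<Longrightarrow>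
    (\<Sum>x\<in>configs W. (\<Prod>u\<in>W. K E \<alpha> P u x) * g (restrict x A)) = (\<Sum>y\<in>configs A. (\<Prod>u\<in>A. K E \<alpha> P u y) * g y)"
proof (induction n arbitrary: W)
  case 0
  have "finite W" using finV 0 finite_subset by blast
  then have "W = A" using 0 by auto
  then show ?case
    by (auto intro!: sum.cong simp: configs_def PiE_restrict)
next
  case (Suc n)
  have fW: "finite W" using finV Suc.prems finite_subset by blast
  have ne: "W - A \<noteq> {}" using Suc.prems by auto
  obtain m where m: "m \<in> W - A" and sk: "\<forall>u\<in>W - A. (m,u) \<notin> E"
    using exists_sink[OF finE acyc ne] by blast
  have sink: "\<forall>u\<in>W. (m,u) \<notin> E"
  proof
    fix u assume u: "u \<in> W"
    show "(m,u) \<notin> E"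
    proof
      assume mu: "(m,u) \<in> E"
      show False
      proof (cases "u \<in> A")
        case True then have "m \<in> A" using anc mu by (auto simp: pa_def)
        then show False using m by simp
      next
        case False then show False using sk u mu by auto
      qed
    qed
  qed
  have mm: "(m,m) \<notin> E" using sink m by auto
  have mV: "m \<in> V" using m Suc.prems by auto
  have "(\<Sum>x\<in>configs W. (\<Prod>u\<in>W. K E \<alpha> P u x) * g (restrict x A)) =
    (\<Sum>x'\<in>configs (W-{m}). (\<Prod>u\<in>W-{m}. K E \<alpha> P u x') * (\<Sum>c\<in>UNIV. K E \<alpha> P m (x'(m:=c)) * g (restrict (x'(m:=c)) A)))"
    using step_lemma[OF fW _ sink, where h="\<lambda>x. g (restrict x A)"] m by simp
  also have "\<dots> = (\<Sum>x'\<in>configs (W-{m}). (\<Prod>u\<in>W-{m}. K E \<alpha> P u x') * g (restrict x' A))"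
  proof (intro sum.cong refl arg_cong2[where f="(*)"])
    fix x'
    have "(\<Sum>c\<in>UNIV. K E \<alpha> P m (x'(m:=c)) * g (restrict (x'(m:=c)) A)) = (\<Sum>c\<in>UNIV. K E \<alpha> P m (x'(m:=c))) * g (restrict x' A)"
      using m by (simp add: restrict_upd_notin sum_distrib_right)
    also have "\<dots> = g (restrict x' A)" using K_norm[OF init cpds mV mm] by simp
    finally show "(\<Sum>c\<in>UNIV. K E \<alpha> P m (x'(m:=c)) * g (restrict (x'(m:=c)) A)) = g (restrict x' A)" .
  qed
  also have "\<dots> = (\<Sum>y\<in>configs A. (\<Prod>u\<in>A. K E \<alpha> P u y) * g y)"
  proof (rule Suc.IH)
    have "W - {m} - A = (W - A) - {m}" by auto
    then show "card (W - {m} - A) = n" using Suc.prems(1) m fW by (simp add: card_Diff_singleton)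
    show "W - {m} \<subseteq> V" using Suc.prems by auto
    show "A \<subseteq> W - {m}" using Suc.prems m by auto
  qed
  finally show ?case .
qed

lemma sum_fibers:
  fixes g :: "'a::finite \<Rightarrow> real" and f :: "'a \<Rightarrow> 'b::finite"
  shows "(\<Sum>b\<in>UNIV. sum g {c. f c = b}) = sum g UNIV"
  using sum.group[of "UNIV::'a set" "UNIV::'b set" f g] by simp

lemma sum_filter_ind:
  fixes g :: "'a::finite \<Rightarrow> real"
  shows "(\<Sum>c\<in>UNIV. g c * (if Q c then 1 else 0)) = sum g {c. Q c}"
proof -
  have "sum g {c. Q c} = sum g {c\<in>UNIV. Q c}" by simp
  also have "\<dots> = (\<Sum>c\<in>UNIV. if Q c then g c else 0)" by (rule sum.inter_filter) simp
  also have "\<dots> = (\<Sum>c\<in>UNIV. g c * (if Q c then 1 else 0))" by (rule sum.cong) auto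
  finally show ?thesis by simp
qed

definition Qk :: "('v \<Rightarrow> ('v \<Rightarrow> 'a) \<Rightarrow> 'a \<Rightarrow> real) \<Rightarrow> ('a \<Rightarrow> 'b) \<Rightarrow> 'v \<Rightarrow> ('v \<Rightarrow> 'a) \<Rightarrow> 'b \<Rightarrow> real" where
  "Qk P f v w b = sum (P v w) {c. f c = b}"

lemma cond_sum:
  fixes \<alpha> :: "'v \<Rightarrow> 'a::finite \<Rightarrow> real" and H :: "'a \<Rightarrow> ('v \<Rightarrow> 'a) \<Rightarrow> bool"
  assumes dag: "is_dag V E" and init: "is_init V E \<alpha>" and cpds: "is_cpds V E P"
    and v: "v \<in> nonsources V E"
  defines "A \<equiv> insert v {u. (u,v) \<in> E\<^sup>+}"
  shows "prb V E \<alpha> P (\<lambda>x. H (x v) (restrict x (pa E v))) =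
    (\<Sum>y\<in>configs (A-{v}). (\<Prod>u\<in>A-{v}. K E \<alpha> P u y) *
        (\<Sum>c\<in>UNIV. P v (restrict y (pa E v)) c * (if H c (restrict y (pa E v)) then 1 else 0)))"
proof -
  have finV: "finite V" and EV: "E \<subseteq> V \<times> V" and acyc: "acyclic E" using dag by (auto simp: is_dag_def)
  have finE: "finite E" using finV EV finite_subset by blast
  have vV: "v \<in> V" and pane: "pa E v \<noteq> {}" using v by (auto simp: nonsources_def sources_def)
  have tV: "(u,v) \<in> E\<^sup>+ \<Longrightarrow> u \<in> V" for u
    using trancl_subset_Sigma[OF EV] by blast
  have AV: "A \<subseteq> V" unfolding A_def using vV tV by auto
  have anc: "\<forall>u\<in>A. pa E u \<subseteq> A"
    unfolding A_def pa_def by (auto intro: trancl_into_trancl2)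
  have vsink: "\<forall>u\<in>A. (v,u) \<notin> E"
  proof
    fix u assume "u \<in> A"
    then have "u = v \<or> (u,v) \<in> E\<^sup>+" unfolding A_def by auto
    then show "(v,u) \<notin> E" using acyc unfolding acyclic_def by (auto intro: trancl_into_trancl2)
  qed
  have vpa: "v \<notin> pa E v" using vsink unfolding A_def pa_def by auto
  have paA: "pa E v \<subseteq> A - {v}" using anc vpa unfolding A_def by auto
  have finA: "finite A" using AV finV finite_subset by blast
  define G where "G = (\<lambda>y::'v \<Rightarrow> 'a. if H (y v) (restrict y (pa E v)) then 1 else (0::real))"
  have "prb V E \<alpha> P (\<lambda>x. H (x v) (restrict x (pa E v))) =
      (\<Sum>x\<in>configs V. (\<Prod>u\<in>V. K E \<alpha> P u x) * G (restrict x A))"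
    unfolding prb_K[OF finV] G_def
  proof (intro sum.cong refl arg_cong2[where f="(*)"])
    fix x :: "'v \<Rightarrow> 'a"
    have "A \<inter> pa E v = pa E v" using paA by blast
    then have "restrict (restrict x A) (pa E v) = restrict x (pa E v)" by simp
    moreover have "restrict x A v = x v" unfolding A_def by simp
    ultimately show "(if H (x v) (restrict x (pa E v)) then 1 else 0) =
       (if H (restrict x A v) (restrict (restrict x A) (pa E v)) then 1 else (0::real))" by simp
  qed
  also have "\<dots> = (\<Sum>y\<in>configs A. (\<Prod>u\<in>A. K E \<alpha> P u y) * G y)"
    by (rule marg_aux[OF finE acyc init cpds finV anc refl order_refl AV])
  also have "\<dots> = (\<Sum>y\<in>configs (A-{v}). (\<Prod>u\<in>A-{v}. K E \<alpha> P u y) * (\<Sum>c\<in>UNIV. K E \<alpha> P v (y(v:=c)) * G (y(v:=c))))"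
    by (rule step_lemma[OF finA _ vsink]) (simp add: A_def)
  also have "\<dots> = (\<Sum>y\<in>configs (A-{v}). (\<Prod>u\<in>A-{v}. K E \<alpha> P u y) *
        (\<Sum>c\<in>UNIV. P v (restrict y (pa E v)) c * (if H c (restrict y (pa E v)) then 1 else 0)))"
    unfolding G_def using vpa pane by (simp add: K_upd_self)
  finally show ?thesis .
qed

lemma cond_prop:
  fixes \<alpha> :: "'v \<Rightarrow> 'a::finite \<Rightarrow> real" and f :: "'a \<Rightarrow> 'b"
  assumes dag: "is_dag V E" and init: "is_init V E \<alpha>" and cpds: "is_cpds V E P"
    and v: "v \<in> nonsources V E"
    and q: "\<forall>w\<in>configs (pa E v). T w \<longrightarrow> Qk P f v w b = q"
  shows "prb V E \<alpha> P (\<lambda>x. f (x v) = b \<and> T (restrict x (pa E v))) = q * prb V E \<alpha> P (\<lambda>x. T (restrict x (pa E v)))"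
proof -
  have i1: "(\<Sum>c\<in>UNIV. P v r c * (if f c = b \<and> T r then 1 else 0)) = q * (if T r then 1 else 0)"
    if r: "r \<in> configs (pa E v)" for r
  proof (cases "T r")
    case True
    then have "(\<Sum>c\<in>UNIV. P v r c * (if f c = b \<and> T r then 1 else 0)) = Qk P f v r b"
      unfolding Qk_def using sum_filter_ind[of "P v r" "\<lambda>c. f c = b"] by simp
    then show ?thesis using q r True by simp
  qed simp
  have i2: "(\<Sum>c\<in>UNIV. P v r c * (if T r then 1 else 0)) = (if T r then 1 else 0)"
    if r: "r \<in> configs (pa E v)" for r
    using cpds v r unfolding is_cpds_def by (simp add: sum_distrib_right[symmetric])
  have rc: "restrict y (pa E v) \<in> configs (pa E v)" for y :: "'v \<Rightarrow> 'a"
    by (simp add: configs_def)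
  show ?thesis
    unfolding cond_sum[OF dag init cpds v, where H="\<lambda>c w. f c = b \<and> T w"]
      cond_sum[OF dag init cpds v, where H="\<lambda>c w. T w"]
    unfolding sum_distrib_left[of q]
    by (rule sum.cong) (simp_all add: i1[OF rc] i2[OF rc])
qed

definition qk :: "('v \<Rightarrow> 'a \<Rightarrow> real) \<Rightarrow> ('v \<Rightarrow> ('v \<Rightarrow> 'a) \<Rightarrow> 'a \<Rightarrow> real) \<Rightarrow> ('a \<Rightarrow> 'b) \<Rightarrow> ('v \<times> 'v) set \<Rightarrow> 'v \<Rightarrow> ('v \<Rightarrow> 'b) \<Rightarrow> 'b \<Rightarrow> real" where
  "qk \<alpha> P f E v w b = (if pa E v = {} then sum (\<alpha> v) {c. f c = b}
      else Qk P f v (restrict (\<lambda>u. inv f (w u)) (pa E v)) b)"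

lemma fact_aux:
  fixes \<alpha> :: "'v \<Rightarrow> 'a::finite \<Rightarrow> real" and f :: "'a \<Rightarrow> 'b::finite" and u :: "'v \<Rightarrow> 'b"
  assumes finE: "finite E" and acyc: "acyclic E" and init: "is_init V E \<alpha>" and cpds: "is_cpds V E P"
    and finV: "finite V" and surj: "surj f"
    and qc: "\<forall>v\<in>nonsources V E. \<forall>w\<in>configs (pa E v). \<forall>w'\<in>configs (pa E v).
        (\<forall>u\<in>pa E v. f (w u) = f (w' u)) \<longrightarrow> (\<forall>b. Qk P f v w b = Qk P f v w' b)"
  shows "card W = n \<Longrightarrow> W \<subseteq> V \<Longrightarrow> (\<forall>v\<in>W. pa E v \<subseteq> W) \<Longrightarrow>
    (\<Sum>x\<in>configs W. (\<Prod>v\<in>W. K E \<alpha> P v x) * (if \<forall>v\<in>W. f (x v) = u v then 1 else 0)) =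
    (\<Prod>v\<in>W. qk \<alpha> P f E v (restrict u (pa E v)) (u v))"
proof (induction n arbitrary: W)
  case 0
  have "finite W" using finV 0 finite_subset by blast
  then have "W = {}" using 0 by auto
  then show ?case by (simp add: configs_def)
next
  case (Suc n)
  have fW: "finite W" using finV Suc.prems finite_subset by blast
  have ne: "W \<noteq> {}" using Suc.prems by auto
  obtain m where m: "m \<in> W" and sink: "\<forall>u\<in>W. (m,u) \<notin> E"
    using exists_sink[OF finE acyc ne] by blast
  have mm: "(m,m) \<notin> E" using sink m by auto
  have mpa: "m \<notin> pa E m" using mm by (simp add: pa_def)
  have mV: "m \<in> V" using m Suc.prems by auto
  have pam: "pa E m \<subseteq> W - {m}" using Suc.prems(3) m mpa by auto
  define qm where "qm = qk \<alpha> P f E m (restrict u (pa E m)) (u m)"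
  have inner: "(\<Sum>c\<in>UNIV. K E \<alpha> P m (x'(m:=c)) * (if \<forall>v\<in>W. f ((x'(m:=c)) v) = u v then 1 else 0)) =
      (if \<forall>v\<in>W-{m}. f (x' v) = u v then 1 else 0) * qm" for x'
  proof (cases "\<forall>v\<in>W-{m}. f (x' v) = u v")
    case False
    then obtain v where "v \<in> W - {m}" "f (x' v) \<noteq> u v" by blast
    then have "\<not> (\<forall>v\<in>W. f ((x'(m:=c)) v) = u v)" for c by force
    then have z: "(if \<forall>v\<in>W. f ((x'(m:=c)) v) = u v then 1 else 0) = (0::real)" for c by presburger
    have "(\<Sum>c\<in>UNIV. K E \<alpha> P m (x'(m:=c)) * (if \<forall>v\<in>W. f ((x'(m:=c)) v) = u v then 1 else 0)) = 0"
      by (simp only: z mult_zero_right sum.neutral_const)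
    moreover have "(if \<forall>v\<in>W-{m}. f (x' v) = u v then 1 else 0) * qm = 0" by (simp only: if_not_P[OF False] mult_zero_left)
    ultimately show ?thesis by (simp only:)
  next
    case C: True
    have "(\<forall>v\<in>W. f ((x'(m:=c)) v) = u v) = (f c = u m)" for c using C m by auto
    then have "(\<Sum>c\<in>UNIV. K E \<alpha> P m (x'(m:=c)) * (if \<forall>v\<in>W. f ((x'(m:=c)) v) = u v then 1 else 0)) =
        (\<Sum>c\<in>UNIV. K E \<alpha> P m (x'(m:=c)) * (if f c = u m then 1 else 0))" by simp
    also have "\<dots> = sum (\<lambda>c. K E \<alpha> P m (x'(m:=c))) {c. f c = u m}" by (rule sum_filter_ind)
    also have "\<dots> = qm"
    proof (cases "pa E m = {}")
      case True
      then show ?thesis unfolding qm_def qk_def by (simp add: K_upd_self[OF mpa])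
    next
      case False
      then have mn: "m \<in> nonsources V E" using mV by (simp add: nonsources_def sources_def)
      have "sum (\<lambda>c. K E \<alpha> P m (x'(m:=c))) {c. f c = u m} = Qk P f m (restrict x' (pa E m)) (u m)"
        unfolding Qk_def using False by (simp add: K_upd_self[OF mpa])
      also have "\<dots> = Qk P f m (restrict (\<lambda>p. inv f (restrict u (pa E m) p)) (pa E m)) (u m)"
      proof -
        have "\<forall>p\<in>pa E m. f (restrict x' (pa E m) p) = f (restrict (\<lambda>p. inv f (restrict u (pa E m) p)) (pa E m) p)"
          using C pam by (auto simp: surj_f_inv_f[OF surj])
        then show ?thesis using qc mn by (simp add: configs_def)
      qed
      finally show ?thesis unfolding qm_def qk_def using False by simp
    qed
    finally show ?thesis using C by simp
  qed
  have "(\<Sum>x\<in>configs W. (\<Prod>v\<in>W. K E \<alpha> P v x) * (if \<forall>v\<in>W. f (x v) = u v then 1 else 0)) =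
    (\<Sum>x'\<in>configs (W-{m}). (\<Prod>v\<in>W-{m}. K E \<alpha> P v x') * ((if \<forall>v\<in>W-{m}. f (x' v) = u v then 1 else 0) * qm))"
    using step_lemma[OF fW m sink, where h="\<lambda>x. if \<forall>v\<in>W. f (x v) = u v then 1 else 0"] inner by simp
  also have "\<dots> = qm * (\<Sum>x'\<in>configs (W-{m}). (\<Prod>v\<in>W-{m}. K E \<alpha> P v x') * (if \<forall>v\<in>W-{m}. f (x' v) = u v then 1 else 0))"
    by (simp add: sum_distrib_left mult_ac)
  also have "\<dots> = qm * (\<Prod>v\<in>W-{m}. qk \<alpha> P f E v (restrict u (pa E v)) (u v))"
  proof -
    have "card (W - {m}) = n" using Suc.prems(1) m fW by simp
    moreover have "W - {m} \<subseteq> V" using Suc.prems by auto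
    moreover have "\<forall>v\<in>W-{m}. pa E v \<subseteq> W - {m}" using Suc.prems(3) sink by (auto simp: pa_def)
    ultimately have "(\<Sum>x'\<in>configs (W-{m}). (\<Prod>v\<in>W-{m}. K E \<alpha> P v x') * (if \<forall>v\<in>W-{m}. f (x' v) = u v then 1 else 0))
       = (\<Prod>v\<in>W-{m}. qk \<alpha> P f E v (restrict u (pa E v)) (u v))" by (rule Suc.IH)
    then show ?thesis by (simp only:)
  qed
  also have "\<dots> = (\<Prod>v\<in>W. qk \<alpha> P f E v (restrict u (pa E v)) (u v))"
    unfolding qm_def by (rule prod.remove[OF fW m, symmetric])
  finally show ?case .
qed

lemma restrict_eq_iff: "w \<in> configs S \<Longrightarrow> (restrict x S = w) = (\<forall>u\<in>S. x u = w u)"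
  unfolding configs_def by (auto simp: fun_eq_iff restrict_def PiE_iff extensional_def)

lemma depth_source:
  assumes "v \<in> V" "pa E v = {}"
  shows "depth V E v = 0"
proof -
  have "{length xs - 1 | xs. xs \<noteq> [] \<and> hd xs \<in> sources V E \<and> last xs = v \<and> dpath E xs} = {0}"
  proof (intro equalityI subsetI)
    fix n assume "n \<in> {length xs - 1 | xs. xs \<noteq> [] \<and> hd xs \<in> sources V E \<and> last xs = v \<and> dpath E xs}"
    then obtain xs where n: "n = length xs - 1" and xs: "xs \<noteq> []" "last xs = v" "dpath E xs" by blast
    show "n \<in> {0}"
    proof (rule ccontr)
      assume "n \<notin> {0}"
      then have l: "Suc (length xs - 2) < length xs" and l2: "Suc (length xs - 2) = length xs - 1" using n by auto
      then have "(xs ! (length xs - 2), xs ! Suc (length xs - 2)) \<in> E" using xs(3) unfolding dpath_def by blast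
      moreover have "xs ! Suc (length xs - 2) = v" using l2 xs by (simp add: last_conv_nth)
      ultimately have "xs ! (length xs - 2) \<in> pa E v" by (simp add: pa_def)
      then show False using assms by simp
    qed
  next
    fix n assume "n \<in> {0::nat}"
    moreover have "[v] \<noteq> [] \<and> hd [v] \<in> sources V E \<and> last [v] = v \<and> dpath E [v]"
      using assms by (simp add: sources_def dpath_def)
    ultimately show "n \<in> {length xs - 1 | xs. xs \<noteq> [] \<and> hd xs \<in> sources V E \<and> last xs = v \<and> dpath E xs}"
      by force
  qed
  then show ?thesis unfolding depth_def by simp
qed

lemma cprb_lump:
  fixes \<alpha> :: "'v \<Rightarrow> 'a::finite \<Rightarrow> real" and f :: "'a \<Rightarrow> 'b"
  assumes dag: "is_dag V E" and init: "is_init V E \<alpha>" and cpds: "is_cpds V E P"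
    and v: "v \<in> nonsources V E" and w: "w \<in> configs (pa E v)" and wb: "\<forall>u\<in>pa E v. f (w u) = bpa u"
    and qc: "\<forall>w'\<in>configs (pa E v). (\<forall>u\<in>pa E v. f (w' u) = f (w u)) \<longrightarrow> Qk P f v w' b = Qk P f v w b"
    and pos: "prb V E \<alpha> P (\<lambda>x. \<forall>u\<in>pa E v. f (x u) = bpa u) > 0"
  shows "cprb V E \<alpha> P (\<lambda>x. f (x v) = b) (\<lambda>x. \<forall>u\<in>pa E v. f (x u) = bpa u) = Qk P f v w b"
proof -
  define T where "T = (\<lambda>w'::'v \<Rightarrow> 'a. \<forall>u\<in>pa E v. f (w' u) = bpa u)"
  have ev: "(\<lambda>x. \<forall>u\<in>pa E v. f (x u) = bpa u) = (\<lambda>x. T (restrict x (pa E v)))"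
    unfolding T_def by auto
  have q: "\<forall>w'\<in>configs (pa E v). T w' \<longrightarrow> Qk P f v w' b = Qk P f v w b"
    using qc wb unfolding T_def by auto
  have "cprb V E \<alpha> P (\<lambda>x. f (x v) = b) (\<lambda>x. \<forall>u\<in>pa E v. f (x u) = bpa u) =
     prb V E \<alpha> P (\<lambda>x. f (x v) = b \<and> T (restrict x (pa E v))) / prb V E \<alpha> P (\<lambda>x. T (restrict x (pa E v)))"
    unfolding cprb_def ev by simp
  also have "\<dots> = Qk P f v w b"
    unfolding cond_prop[OF dag init cpds v q] using pos ev by simp
  finally show ?thesis .
qed

theorem mainTheorem11:
  fixes V :: "'v set" and E :: "('v \<times> 'v) set"
    and \<alpha> :: "'v \<Rightarrow> 'a::finite \<Rightarrow> real"
    and P :: "'v \<Rightarrow> ('v \<Rightarrow> 'a) \<Rightarrow> 'a \<Rightarrow> real"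
    and f :: "'a \<Rightarrow> 'b::finite"
  assumes dag: "is_dag V E"
    and init: "is_init V E \<alpha>"
    and cpds: "is_cpds V E P"
    and full: "full_support V E \<alpha> P"
    and surj: "surj f"
    and lump: "\<forall>v \<in> nonsources V E. \<forall>w \<in> configs (pa E v). \<forall>w' \<in> configs (pa E v).
        (\<forall>u \<in> pa E v. f (w u) = f (w' u)) \<longrightarrow> (\<forall>b.
          cprb V E \<alpha> P (\<lambda>x. f (x v) = b) (\<lambda>x. \<forall>u \<in> pa E v. x u = w u) =
          cprb V E \<alpha> P (\<lambda>x. f (x v) = b) (\<lambda>x. \<forall>u \<in> pa E v. x u = w' u))"
  shows "D3 V E P f \<and>
    (\<forall>v \<in> V. depth V E v \<ge> 1 \<longrightarrow> (\<forall>w \<in> configs (pa E v). \<forall>b. \<forall>\<alpha>'.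
        is_init V E \<alpha>' \<and> prb V E \<alpha>' P (\<lambda>x. \<forall>u \<in> pa E v. f (x u) = f (w u)) > 0 \<longrightarrow>
        cprb V E \<alpha>' P (\<lambda>x. f (x v) = b) (\<lambda>x. \<forall>u \<in> pa E v. f (x u) = f (w u)) =
        cprb V E \<alpha> P (\<lambda>x. f (x v) = b) (\<lambda>x. \<forall>u \<in> pa E v. x u = w u)))"
proof -
  have finV: "finite V" and EV: "E \<subseteq> V \<times> V" and acyc: "acyclic E" using dag by (auto simp: is_dag_def)
  have finE: "finite E" using finV EV finite_subset by blast
  have paV: "pa E v \<subseteq> V" for v using EV by (auto simp: pa_def)
  have finC: "finite (configs V :: ('v \<Rightarrow> 'a) set)" unfolding configs_def using finV by (simp add: finite_PiE)
  have pos: "prb V E \<alpha> P (\<lambda>x. \<forall>u\<in>pa E v. x u = w u) > 0" if w: "w \<in> configs (pa E v)" for v w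
    unfolding prb_def
  proof (rule sum_pos)
    show "finite {x \<in> configs V. \<forall>u\<in>pa E v. x u = w u}" using finC by simp
    have "restrict w V \<in> {x \<in> configs V. \<forall>u\<in>pa E v. x u = w u}"
      using paV[of v] by (auto simp: configs_def)
    then show "{x \<in> configs V. \<forall>u\<in>pa E v. x u = w u} \<noteq> {}" by blast
    show "\<And>i. i \<in> {x \<in> configs V. \<forall>u\<in>pa E v. x u = w u} \<Longrightarrow> 0 < joint V E \<alpha> P i"
      using full unfolding full_support_def by blast
  qed
  have Qeq: "cprb V E \<alpha> P (\<lambda>x. f (x v) = b) (\<lambda>x. \<forall>u\<in>pa E v. x u = w u) = Qk P f v w b"
    if v: "v \<in> nonsources V E" and w: "w \<in> configs (pa E v)" for v w b
  proof -
    have ev: "(\<lambda>x. \<forall>u\<in>pa E v. x u = w u) = (\<lambda>x. restrict x (pa E v) = w)"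
      using restrict_eq_iff[OF w] by auto
    have q: "\<forall>w'\<in>configs (pa E v). w' = w \<longrightarrow> Qk P f v w' b = Qk P f v w b" by simp
    have p: "prb V E \<alpha> P (\<lambda>x. restrict x (pa E v) = w) > 0" using pos[OF w] ev by simp
    have "cprb V E \<alpha> P (\<lambda>x. f (x v) = b) (\<lambda>x. \<forall>u\<in>pa E v. x u = w u) =
      prb V E \<alpha> P (\<lambda>x. f (x v) = b \<and> restrict x (pa E v) = w) / prb V E \<alpha> P (\<lambda>x. restrict x (pa E v) = w)"
      unfolding cprb_def ev by simp
    also have "\<dots> = Qk P f v w b"
      unfolding cond_prop[OF dag init cpds v q] using p by simp
    finally show ?thesis .
  qed
  have qc: "\<forall>v\<in>nonsources V E. \<forall>w\<in>configs (pa E v). \<forall>w'\<in>configs (pa E v).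
        (\<forall>u\<in>pa E v. f (w u) = f (w' u)) \<longrightarrow> (\<forall>b. Qk P f v w b = Qk P f v w' b)"
  proof (intro ballI impI allI)
    fix v w w' b assume v: "v \<in> nonsources V E" and w: "w \<in> configs (pa E v)" and w': "w' \<in> configs (pa E v)"
      and fw: "\<forall>u\<in>pa E v. f (w u) = f (w' u)"
    show "Qk P f v w b = Qk P f v w' b"
      using lump[THEN bspec, OF v, THEN bspec, OF w, THEN bspec, OF w', THEN mp, OF fw, THEN spec, of b] Qeq[OF v w, of b] Qeq[OF v w', of b] by simp
  qed
  have rep: "restrict (\<lambda>u. inv f (bpa u)) (pa E v) \<in> configs (pa E v)"
     "\<forall>u\<in>pa E v. f (restrict (\<lambda>u. inv f (bpa u)) (pa E v) u) = bpa u" for v bpa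
    by (auto simp: configs_def surj_f_inv_f[OF surj])
  have D3a: "factorises V E (\<lambda>u. prb V E \<alpha>' P (\<lambda>x. \<forall>v \<in> V. f (x v) = u v))"
    if init': "is_init V E \<alpha>'" for \<alpha>'
    unfolding factorises_def
  proof (intro exI[of _ "qk \<alpha>' P f E"] conjI ballI allI)
    fix v and w :: "'v \<Rightarrow> 'b" assume vV: "v \<in> V" and w: "w \<in> configs (pa E v)"
    show "0 \<le> qk \<alpha>' P f E v w b" for b
    proof (cases "pa E v = {}")
      case True
      then have "v \<in> sources V E" using vV by (simp add: sources_def)
      then show ?thesis using init' True unfolding qk_def is_init_def by (simp add: sum_nonneg)
    next
      case False
      then have "v \<in> nonsources V E" using vV by (simp add: sources_def nonsources_def)
      then show ?thesis using cpds False rep(1)[of "\<lambda>u. w u" v]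
        unfolding qk_def Qk_def is_cpds_def by (simp add: sum_nonneg)
    qed
    show "sum (qk \<alpha>' P f E v w) UNIV = 1"
    proof (cases "pa E v = {}")
      case True
      then have "v \<in> sources V E" using vV by (simp add: sources_def)
      then show ?thesis using init' True unfolding qk_def is_init_def by (simp add: sum_fibers)
    next
      case False
      then have "v \<in> nonsources V E" using vV by (simp add: sources_def nonsources_def)
      then show ?thesis using cpds False rep(1)[of "\<lambda>u. w u" v]
        unfolding qk_def Qk_def is_cpds_def by (simp add: sum_fibers)
    qed
  next
    fix u :: "'v \<Rightarrow> 'b" assume "u \<in> configs V"
    show "prb V E \<alpha>' P (\<lambda>x. \<forall>v \<in> V. f (x v) = u v) = (\<Prod>v\<in>V. qk \<alpha>' P f E v (restrict u (pa E v)) (u v))"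
      unfolding prb_K[OF finV]
      by (rule fact_aux[OF finE acyc init' cpds finV surj qc refl order_refl]) (use paV in blast)
  qed
  have D3b: "cprb V E \<alpha>' P (\<lambda>x. f (x v) = b) (\<lambda>x. \<forall>u\<in>pa E v. f (x u) = bpa u) =
      Qk P f v (restrict (\<lambda>u. inv f (bpa u)) (pa E v)) b"
    if init': "is_init V E \<alpha>'" and v: "v \<in> nonsources V E"
      and p: "prb V E \<alpha>' P (\<lambda>x. \<forall>u\<in>pa E v. f (x u) = bpa u) > 0" for \<alpha>' v b bpa
  proof (rule cprb_lump[OF dag init' cpds v rep(1) rep(2) _ p])
    show "\<forall>w'\<in>configs (pa E v). (\<forall>u\<in>pa E v. f (w' u) = f (restrict (\<lambda>u. inv f (bpa u)) (pa E v) u)) \<longrightarrow>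
       Qk P f v w' b = Qk P f v (restrict (\<lambda>u. inv f (bpa u)) (pa E v)) b"
      using qc v rep(1) by metis
  qed
  have "D3 V E P f"
    unfolding D3_def using D3a D3b by auto
  moreover have "\<forall>v \<in> V. depth V E v \<ge> 1 \<longrightarrow> (\<forall>w \<in> configs (pa E v). \<forall>b. \<forall>\<alpha>'.
        is_init V E \<alpha>' \<and> prb V E \<alpha>' P (\<lambda>x. \<forall>u \<in> pa E v. f (x u) = f (w u)) > 0 \<longrightarrow>
        cprb V E \<alpha>' P (\<lambda>x. f (x v) = b) (\<lambda>x. \<forall>u \<in> pa E v. f (x u) = f (w u)) =
        cprb V E \<alpha> P (\<lambda>x. f (x v) = b) (\<lambda>x. \<forall>u \<in> pa E v. x u = w u))"
  proof (intro ballI impI allI)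
    fix v w b \<alpha>' assume vV: "v \<in> V" and d: "depth V E v \<ge> 1" and w: "w \<in> configs (pa E v)"
      and h: "is_init V E \<alpha>' \<and> prb V E \<alpha>' P (\<lambda>x. \<forall>u \<in> pa E v. f (x u) = f (w u)) > 0"
    have "pa E v \<noteq> {}" using depth_source[OF vV] d by fastforce
    then have v: "v \<in> nonsources V E" using vV by (simp add: sources_def nonsources_def)
    have "cprb V E \<alpha>' P (\<lambda>x. f (x v) = b) (\<lambda>x. \<forall>u \<in> pa E v. f (x u) = f (w u)) = Qk P f v w b"
    proof (rule cprb_lump[OF dag _ cpds v w])
      show "is_init V E \<alpha>'" using h by simp
      show "prb V E \<alpha>' P (\<lambda>x. \<forall>u \<in> pa E v. f (x u) = f (w u)) > 0" using h by simp
      show "\<forall>w'\<in>configs (pa E v). (\<forall>u\<in>pa E v. f (w' u) = f (w u)) \<longrightarrow> Qk P f v w' b = Qk P f v w b"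
        using qc v w by metis
    qed simp
    then show "cprb V E \<alpha>' P (\<lambda>x. f (x v) = b) (\<lambda>x. \<forall>u \<in> pa E v. f (x u) = f (w u)) =
        cprb V E \<alpha> P (\<lambda>x. f (x v) = b) (\<lambda>x. \<forall>u \<in> pa E v. x u = w u)"
      using Qeq[OF v w] by simp
  qed
  ultimately show ?thesis by (rule conjI)
qed

end
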